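(* If $\partial$ is a tree-like $\mathrm{LM}_{\rightarrow}$ deduction of the sequent $\Rightarrow\rho$, then $\phi(\partial)\le(|\rho|+1)^2$.
   Context: Formulas of $\mathcal{L}_{\rightarrow}$ are built from propositional variables using only $\rightarrow$; $|\alpha|$ is the number of occurrences of $\rightarrow$ in $\alpha$. Sequents are $\Gamma\Rightarrow\alpha$ with $\Gamma$ a finite multiset. $\mathrm{LM}_{\rightarrow}$ has axioms $\Gamma,p\Rightarrow p$ ($p$ a variable) and rules: from $\Gamma,\alpha\Rightarrow\beta$ infer $\Gamma\Rightarrow\alpha\rightarrow\beta$ provided $\Gamma$ contains no $(\alpha\rightarrow\beta)\rightarrow\gamma$; from $\Gamma,\alpha,\beta\rightarrow\gamma\Rightarrow\beta$ infer $\Gamma,(\alpha\rightarrow\beta)\rightarrow\gamma\Rightarrow\alpha\rightarrow\beta$; from $\Gamma,p,\gamma\Rightarrow q$ infer $\Gamma,p,p\rightarrow\gamma\Rightarrow q$ ($p\neq q$ variables, $q$ occurring in $\Gamma$ or $\gamma$); from $\Gamma,\alpha,\beta\rightarrow\gamma\Rightarrow\beta$ and $\Gamma,\gamma\Rightarrow q$ infer $\Gamma,(\alpha\rightarrow\beta)\rightarrow\gamma\Rightarrow q$ ($q$ a variable occurring in $\Gamma$ or $\gamma$). $\phi(\partial)$ (the foundation) is the number of distinct formulas occurring in $\partial$. *)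

theory Defs
  imports Main "HOL-Library.Multiset"
begin

datatype form = Var nat | Imp form form

text \<open>\<open>|\<alpha>|\<close>: number of occurrences of \<open>\<rightarrow>\<close>.\<close>
fun imps :: "form \<Rightarrow> nat" where
  "imps (Var p) = 0"
| "imps (Imp a b) = Suc (imps a + imps b)"

fun vars :: "form \<Rightarrow> nat set" where
  "vars (Var p) = {p}"
| "vars (Imp a b) = vars a \<union> vars b"

type_synonym sequent = "form multiset \<times> form"

definition occurs_in :: "nat \<Rightarrow> form multiset \<Rightarrow> form \<Rightarrow> bool" where
  "occurs_in q G g \<longleftrightarrow> (\<exists>f\<in>#G. q \<in> vars f) \<or> q \<in> vars g"

inductive lm_rule :: "sequent list \<Rightarrow> sequent \<Rightarrow> bool" where
  ax: "lm_rule [] (G + {#Var p#}, Var p)"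
| impR: "(\<forall>g. Imp (Imp a b) g \<notin># G) \<Longrightarrow>
         lm_rule [(G + {#a#}, b)] (G, Imp a b)"
| impImpR: "lm_rule [(G + {#a, Imp b g#}, b)] (G + {#Imp (Imp a b) g#}, Imp a b)"
| impVarL: "p \<noteq> q \<Longrightarrow> occurs_in q (G + {#Var p#}) g \<Longrightarrow>
         lm_rule [(G + {#Var p, g#}, Var q)] (G + {#Var p, Imp (Var p) g#}, Var q)"
| impImpL: "occurs_in q G g \<Longrightarrow>
         lm_rule [(G + {#a, Imp b g#}, b), (G + {#g#}, Var q)]
                 (G + {#Imp (Imp a b) g#}, Var q)"

datatype dtree = Node sequent "dtree list"

fun root :: "dtree \<Rightarrow> sequent" where
  "root (Node s ts) = s"

fun lm_deduction :: "dtree \<Rightarrow> bool" where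
  "lm_deduction (Node s ts) \<longleftrightarrow> lm_rule (map root ts) s \<and> (\<forall>t\<in>set ts. lm_deduction t)"

fun seq_forms :: "sequent \<Rightarrow> form set" where
  "seq_forms (G, a) = set_mset G \<union> {a}"

fun forms :: "dtree \<Rightarrow> form set" where
  "forms (Node s ts) = seq_forms s \<union> (\<Union>t\<in>set ts. forms t)"

text \<open>The foundation \<open>\<phi>(\<partial>)\<close>: number of distinct formulas occurring in \<open>\<partial>\<close>.\<close>
definition foundation :: "dtree \<Rightarrow> nat" where
  "foundation d = card (forms d)"

end

theory Submission
  imports Defs
begin

fun sub :: "form \<Rightarrow> form set" where
  "sub (Var p) = {Var p}"
| "sub (Imp a b) = insert (Imp a b) (sub a \<union> sub b)"

fun rs :: "form \<Rightarrow> form set" where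
  "rs (Var p) = {}"
| "rs (Imp a b) = insert b (rs b)"

fun ext :: "form \<Rightarrow> form set" where
  "ext (Var p) = {}"
| "ext (Imp a b) = (\<lambda>Y. Imp Y b) ` rs a \<union> ext a \<union> ext b"

lemma sub_self: "x \<in> sub x" by (cases x) auto

lemma sub_trans: "x \<in> sub y \<Longrightarrow> sub x \<subseteq> sub y"
  by (induction y) auto

lemma rs_sub: "rs x \<subseteq> sub x"
  by (induction x) (auto simp: sub_self)

lemma rs_trans: "y \<in> rs x \<Longrightarrow> rs y \<subseteq> rs x"
  by (induction x) auto

lemma ext_char: "y \<in> ext r \<Longrightarrow> \<exists>X g Y. y = Imp Y g \<and> Imp X g \<in> sub r \<and> Y \<in> rs X"
  by (induction r) auto

lemma ext_intro: "Imp X g \<in> sub r \<Longrightarrow> Y \<in> rs X \<Longrightarrow> Imp Y g \<in> ext r"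
  by (induction r) auto

lemma fin_sub: "finite (sub x)" by (induction x) auto
lemma fin_rs: "finite (rs x)" by (induction x) auto
lemma fin_ext: "finite (ext x)" by (induction x) (auto simp: fin_rs)

lemma card_sub: "card (sub x) \<le> 2 * imps x + 1"
proof (induction x)
  case (Var x) then show ?case by simp
next
  case (Imp a b)
  have "card (sub (Imp a b)) \<le> Suc (card (sub a \<union> sub b))"
    by (simp add: card_insert_le_m1 fin_sub card_insert_if)
  also have "\<dots> \<le> Suc (card (sub a) + card (sub b))" using card_Un_le by auto
  finally show ?case using Imp by simp
qed

lemma card_rs: "card (rs x) \<le> imps x"
proof (induction x)
  case (Var x) then show ?case by simp
next
  case (Imp a b)
  have "card (rs (Imp a b)) \<le> Suc (card (rs b))"
    by (simp add: fin_rs card_insert_if)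
  then show ?case using Imp by simp
qed

lemma card_ext: "card (ext x) \<le> imps x ^ 2"
proof (induction x)
  case (Var x) then show ?case by simp
next
  case (Imp a b)
  have "card (ext (Imp a b)) \<le> card ((\<lambda>Y. Imp Y b) ` rs a) + card (ext a) + card (ext b)"
    by (simp, meson card_Un_le le_trans add_le_mono order_refl)
  also have "\<dots> \<le> imps a + imps a ^ 2 + imps b ^ 2"
    using Imp card_rs[of a] card_image_le[OF fin_rs, of "\<lambda>Y. Imp Y b" a] by linarith
  also have "\<dots> \<le> imps (Imp a b) ^ 2" by (simp add: power2_eq_square algebra_simps)
  finally show ?case .
qed

definition clo :: "form \<Rightarrow> form set" where "clo r = sub r \<union> ext r"

lemma clo_comp: "Imp a b \<in> clo r \<Longrightarrow> a \<in> clo r \<and> b \<in> clo r"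
proof -
  assume h: "Imp a b \<in> clo r"
  have "a \<in> sub r \<and> b \<in> sub r"
  proof (cases "Imp a b \<in> sub r")
    case True
    then have "sub (Imp a b) \<subseteq> sub r" by (rule sub_trans)
    then show ?thesis using sub_self by auto
  next
    case False
    then have "Imp a b \<in> ext r" using h clo_def by auto
    then obtain X where "Imp X b \<in> sub r" "a \<in> rs X" using ext_char by blast
    then have "sub (Imp X b) \<subseteq> sub r" using sub_trans by blast
    then show ?thesis using \<open>a \<in> rs X\<close> rs_sub sub_self by auto
  qed
  then show ?thesis by (simp add: clo_def)
qed

lemma clo_shift: "Imp (Imp a b) g \<in> clo r \<Longrightarrow> Imp b g \<in> clo r"
proof -
  assume h: "Imp (Imp a b) g \<in> clo r"
  show ?thesis
  proof (cases "Imp (Imp a b) g \<in> sub r")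
    case True
    then show ?thesis using ext_intro[OF True, of b] by (simp add: clo_def)
  next
    case False
    then have "Imp (Imp a b) g \<in> ext r" using h clo_def by auto
    then obtain X where "Imp X g \<in> sub r" "Imp a b \<in> rs X" using ext_char by blast
    then have "b \<in> rs X" using rs_trans by fastforce
    then show ?thesis using ext_intro[OF \<open>Imp X g \<in> sub r\<close>] by (simp add: clo_def)
  qed
qed

lemma rule_clo:
  assumes "lm_rule ps s" "seq_forms s \<subseteq> clo r" "p \<in> set ps"
  shows "seq_forms p \<subseteq> clo r"
  using assms
proof (induction rule: lm_rule.induct)
  case (ax G p) then show ?case by simp
next
  case (impR a b G)
  then have "set_mset G \<subseteq> clo r" "Imp a b \<in> clo r" by auto
  then show ?case using impR(3) clo_comp[of a b r] by auto
next
  case (impImpR G a b g)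
  then have "set_mset G \<subseteq> clo r" "Imp a b \<in> clo r" "Imp (Imp a b) g \<in> clo r" by auto
  then show ?case using impImpR(2) clo_comp[of a b r] clo_shift[of a b g r] by auto
next
  case (impVarL p q G g)
  then have "set_mset G \<subseteq> clo r" "Var q \<in> clo r" "Var p \<in> clo r" "Imp (Var p) g \<in> clo r" by auto
  then show ?case using impVarL(4) clo_comp[of "Var p" g r] by auto
next
  case (impImpL q G g a b)
  then have "set_mset G \<subseteq> clo r" "Var q \<in> clo r" "Imp (Imp a b) g \<in> clo r" by auto
  then show ?case using impImpL(3) clo_comp[of "Imp a b" g r] clo_comp[of a b r]
      clo_shift[of a b g r] by auto
qed

lemma forms_clo: "lm_deduction d \<Longrightarrow> seq_forms (root d) \<subseteq> clo r \<Longrightarrow> forms d \<subseteq> clo r"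
proof (induction d rule: lm_deduction.induct)
  case (1 s ts)
  have "\<forall>t\<in>set ts. forms t \<subseteq> clo r"
  proof
    fix t assume t: "t \<in> set ts"
    have "seq_forms (root t) \<subseteq> clo r"
      using rule_clo[of "map root ts" s r "root t"] 1(2,3) t by auto
    then show "forms t \<subseteq> clo r" using 1 t by auto
  qed
  then show ?case using 1(3) by auto
qed

theorem lemma2:
  assumes "lm_deduction d" and "root d = ({#}, \<rho>)"
  shows "foundation d \<le> (imps \<rho> + 1) ^ 2"
proof -
  have "forms d \<subseteq> clo \<rho>"
    using forms_clo[OF assms(1)] assms(2) sub_self by (auto simp: clo_def)
  then have "card (forms d) \<le> card (clo \<rho>)"
    by (simp add: card_mono clo_def fin_sub fin_ext)
  also have "\<dots> \<le> card (sub \<rho>) + card (ext \<rho>)" unfolding clo_def by (rule card_Un_le)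
  also have "\<dots> \<le> (imps \<rho> + 1) ^ 2"
    using card_sub[of \<rho>] card_ext[of \<rho>] by (simp add: power2_eq_square algebra_simps)
  finally show ?thesis by (simp add: foundation_def)
qed

end
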